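(* Let $E$ be a closed formula in which all bound variables are pairwise distinct, and let $x$ be a variable bound in $E$. Let $[\Gamma]_{V(x)}$ be a normal item occurring in a derivation of $\vdash E$ in LJB. Then for every item of $\Gamma$ of the form $[\Gamma']_{V(x')}$, the variable $x'$ is in the scope of $x$.
   Context: Formulas: $A ::= P(t_1,\dots,t_n)\mid A\rightarrow A\mid\forall x\,A$, with first-order terms. A formula is a tree with nodes labelled by atomic formulas, $\rightarrow$, or $\forall x$; positions are node addresses ordered by prefix. In $E$ each bound variable $x$ labels a unique position $\forall x$; a variable $y$ is in the scope of $x$ if the position labelled $\forall x$ is a strict prefix of that labelled $\forall y$. $V(x)$ is the set of variables bound in the subformula $\forall x\,A$ of $E$ at position $\forall x$ (equivalently $x$ together with all variables in the scope of $x$). LJB: an LJB-context is a finite multiset of items; an item is a formula or $[\Gamma]_V$ ($V$ a finite set of variables bound by the bracket, $\Gamma$ an LJB-context); $FV([\Gamma]_V)=FV(\Gamma)\setminus V$. Cleaning rules (anywhere in a context): $[I,\Gamma]_V\longrightarrow I,[\Gamma]_V$ if $FV(I)\cap V=\emptyset$; $[\ ]_V\longrightarrow\emptyset$; $I\,I\longrightarrow I$; an item is normal if no cleaning rule applies inside it; $\Gamma{\downarrow}$ is the normal form for a fixed strategy. LJB rules apply only to LJB-sequents with normal context in which, in each formula, bound variables are distinct and distinct from free variables; formulas are not identified modulo $\alpha$. Rules: (L$\rightarrow$) from $\Gamma'\vdash A_1,\dots,\Gamma'\vdash A_n$ infer $\Gamma\vdash P$, where $\Gamma=\Gamma_1,[\Gamma_2,[\dots\Gamma_{i-1},[\Gamma_i,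 A_1\rightarrow\dots\rightarrow A_n\rightarrow P]_{V_{i-1}}\dots]_{V_2}]_{V_1}$ ($i\ge1$), $\Gamma'=([\dots[[\Gamma_1]_{V_1},\Gamma_2]_{V_2},\dots,\Gamma_{i-1}]_{V_{i-1}},\Gamma_i,A_1\rightarrow\dots\rightarrow A_n\rightarrow P){\downarrow}$, $P$ atomic with no free variable in $V_1\cup\dots\cup V_{i-1}$; (R$\forall$) from $[\Gamma]_V{\downarrow}\vdash A$ infer $\Gamma\vdash\forall x\,A$, $V$ the set of all variables bound in $\forall x\,A$; (R$\rightarrow$) from $(\Gamma,A){\downarrow}\vdash B$ infer $\Gamma\vdash A\rightarrow B$. *)

theory Defs
  imports Main "HOL-Library.Multiset"
begin

type_synonym var = nat

datatype trm = Var var | Fn nat "trm list"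

fun fv_trm :: "trm \<Rightarrow> var set" where
  "fv_trm (Var v) = {v}"
| "fv_trm (Fn f ts) = (\<Union>t\<in>set ts. fv_trm t)"

datatype fm = Atom nat "trm list" | Imp fm fm | All var fm

fun fv :: "fm \<Rightarrow> var set" where
  "fv (Atom p ts) = (\<Union>t\<in>set ts. fv_trm t)"
| "fv (Imp A B) = fv A \<union> fv B"
| "fv (All x A) = fv A - {x}"

fun bvlist :: "fm \<Rightarrow> var list" where
  "bvlist (Atom p ts) = []"
| "bvlist (Imp A B) = bvlist A @ bvlist B"
| "bvlist (All x A) = x # bvlist A"

definition bvars :: "fm \<Rightarrow> var set" where
  "bvars A = set (bvlist A)"

text \<open>Positions: node addresses (lists of child indices); subformula at a position.\<close>
fun sub :: "fm \<Rightarrow> nat list \<Rightarrow> fm option" where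
  "sub A [] = Some A"
| "sub (Imp A B) (i # p) = (if i = 0 then sub A p else if i = 1 then sub B p else None)"
| "sub (All x A) (i # p) = (if i = 0 then sub A p else None)"
| "sub (Atom q ts) (i # p) = None"

definition bpos :: "fm \<Rightarrow> var \<Rightarrow> nat list \<Rightarrow> bool" where
  "bpos E x p \<longleftrightarrow> (\<exists>A. sub E p = Some (All x A))"

definition in_scope :: "fm \<Rightarrow> var \<Rightarrow> var \<Rightarrow> bool" where
  "in_scope E y x \<longleftrightarrow> (\<exists>p q. bpos E x p \<and> bpos E y q \<and> (\<exists>r. r \<noteq> [] \<and> q = p @ r))"

definition Vb :: "fm \<Rightarrow> var \<Rightarrow> var set" where
  "Vb E x = {y. \<exists>p A. sub E p = Some (All x A) \<and> y \<in> bvars (All x A)}"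

datatype item = Fm fm | Br "var set" "item multiset"

type_synonym ctx = "item multiset"

inductive vfree :: "var \<Rightarrow> item \<Rightarrow> bool" where
  "v \<in> fv A \<Longrightarrow> vfree v (Fm A)"
| "I \<in># \<Gamma> \<Longrightarrow> vfree v I \<Longrightarrow> v \<notin> V \<Longrightarrow> vfree v (Br V \<Gamma>)"

definition FV :: "item \<Rightarrow> var set" where
  "FV I = {v. vfree v I}"

inductive occurs :: "item \<Rightarrow> ctx \<Rightarrow> bool" where
  "I \<in># \<Gamma> \<Longrightarrow> occurs I \<Gamma>"
| "Br V \<Delta> \<in># \<Gamma> \<Longrightarrow> occurs I \<Delta> \<Longrightarrow> occurs I \<Gamma>"

inductive clean :: "ctx \<Rightarrow> ctx \<Rightarrow> bool" where
  extrude: "FV I \<inter> V = {} \<Longrightarrow>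
     clean (add_mset (Br V (add_mset I \<Gamma>)) \<Delta>) (add_mset I (add_mset (Br V \<Gamma>) \<Delta>))"
| empty: "clean (add_mset (Br V {#}) \<Delta>) \<Delta>"
| contract: "clean (add_mset I (add_mset I \<Delta>)) (add_mset I \<Delta>)"
| inside: "clean \<Gamma> \<Gamma>' \<Longrightarrow> clean (add_mset (Br V \<Gamma>) \<Delta>) (add_mset (Br V \<Gamma>') \<Delta>)"

definition normal_ctx :: "ctx \<Rightarrow> bool" where
  "normal_ctx \<Gamma> \<longleftrightarrow> \<not> (\<exists>\<Delta>. clean \<Gamma> \<Delta>)"

definition normal_item :: "item \<Rightarrow> bool" where
  "normal_item I \<longleftrightarrow> normal_ctx {#I#}"

definition is_nf_strategy :: "(ctx \<Rightarrow> ctx) \<Rightarrow> bool" where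
  "is_nf_strategy nf \<longleftrightarrow> (\<forall>\<Gamma>. clean\<^sup>*\<^sup>* \<Gamma> (nf \<Gamma>) \<and> normal_ctx (nf \<Gamma>))"

definition wf_fm :: "fm \<Rightarrow> bool" where
  "wf_fm A \<longleftrightarrow> distinct (bvlist A) \<and> bvars A \<inter> fv A = {}"

definition wf_seq :: "ctx \<Rightarrow> fm \<Rightarrow> bool" where
  "wf_seq \<Gamma> C \<longleftrightarrow> normal_ctx \<Gamma> \<and> (\<forall>A. occurs (Fm A) \<Gamma> \<longrightarrow> wf_fm A) \<and> wf_fm C"

text \<open>\<open>plug [(\<Gamma>1,V1),...,(\<Gamma>(i-1),V(i-1))] \<Delta> = \<Gamma>1,[\<Gamma>2,[...[\<Delta>]_V(i-1)...]_V2]_V1\<close>\<close>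
fun plug :: "(ctx \<times> var set) list \<Rightarrow> ctx \<Rightarrow> ctx" where
  "plug [] \<Delta> = \<Delta>"
| "plug ((G, V) # L) \<Delta> = G + {# Br V (plug L \<Delta>) #}"

text \<open>\<open>outer [(\<Gamma>1,V1),...,(\<Gamma>(i-1),V(i-1))] {#} = [...[[\<Gamma>1]_V1,\<Gamma>2]_V2,...,\<Gamma>(i-1)]_V(i-1)\<close>\<close>
fun outer :: "(ctx \<times> var set) list \<Rightarrow> ctx \<Rightarrow> ctx" where
  "outer [] acc = acc"
| "outer ((G, V) # L) acc = outer L {# Br V (acc + G) #}"

definition imps :: "fm list \<Rightarrow> fm \<Rightarrow> fm" where
  "imps As P = foldr Imp As P"

definition rule_inst :: "(ctx \<Rightarrow> ctx) \<Rightarrow> ctx \<Rightarrow> fm \<Rightarrow> (ctx \<times> fm) list \<Rightarrow> bool" where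
  "rule_inst nf \<Gamma> C prems \<longleftrightarrow>
     \<comment> \<open>(R\<rightarrow>)\<close>
     (\<exists>A B. C = Imp A B \<and> prems = [(nf (add_mset (Fm A) \<Gamma>), B)])
   \<or> \<comment> \<open>(R\<forall>)\<close>
     (\<exists>x A. C = All x A \<and> prems = [(nf {# Br (bvars (All x A)) \<Gamma> #}, A)])
   \<or> \<comment> \<open>(L\<rightarrow>)\<close>
     (\<exists>L Gi As p ts. C = Atom p ts
        \<and> \<Gamma> = plug L (Gi + {# Fm (imps As (Atom p ts)) #})
        \<and> fv (Atom p ts) \<inter> (\<Union>(snd ` set L)) = {}
        \<and> prems = map (\<lambda>A. (nf (outer L {#} + Gi + {# Fm (imps As (Atom p ts)) #}), A)) As)"

datatype dtree = DNode ctx fm "dtree list"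

fun root :: "dtree \<Rightarrow> ctx \<times> fm" where
  "root (DNode G C ts) = (G, C)"

inductive derivation :: "(ctx \<Rightarrow> ctx) \<Rightarrow> dtree \<Rightarrow> bool" for nf where
  "wf_seq G C \<Longrightarrow> rule_inst nf G C (map root ts) \<Longrightarrow> (\<forall>t\<in>set ts. derivation nf t)
   \<Longrightarrow> derivation nf (DNode G C ts)"

inductive in_tree :: "ctx \<times> fm \<Rightarrow> dtree \<Rightarrow> bool" where
  "in_tree (G, C) (DNode G C ts)"
| "t \<in> set ts \<Longrightarrow> in_tree s t \<Longrightarrow> in_tree s (DNode G C ts)"

definition item_in_tree :: "item \<Rightarrow> dtree \<Rightarrow> bool" where
  "item_in_tree I T \<longleftrightarrow> (\<exists>G C. in_tree (G, C) T \<and> occurs I G)"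

end

theory Submission
  imports Defs
begin


lemma sub_append: "sub F (p @ q) = (case sub F p of None \<Rightarrow> None | Some G \<Rightarrow> sub G q)"
  by (induction F p rule: sub.induct) auto

lemma sub_bvlist: "sub F p = Some G \<Longrightarrow> set (bvlist G) \<subseteq> set (bvlist F)"
  by (induction F p rule: sub.induct) (auto split: if_splits)

lemma bpos_Imp_Cons[simp]: "bpos (Imp A B) v (i#p) = (i = 0 \<and> bpos A v p \<or> i = 1 \<and> bpos B v p)"
  by (auto simp: bpos_def)
lemma bpos_All_Cons[simp]: "bpos (All x A) v (i#p) = (i = 0 \<and> bpos A v p)"
  by (auto simp: bpos_def)
lemma bpos_Atom[simp]: "bpos (Atom n ts) v p = False"
  by (cases p) (auto simp: bpos_def)
lemma bpos_Imp_Nil[simp]: "bpos (Imp A B) v [] = False"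
  by (auto simp: bpos_def)
lemma bpos_All_Nil[simp]: "bpos (All x A) v [] = (v = x)"
  by (auto simp: bpos_def)

lemma bpos_in: "bpos F v p \<Longrightarrow> v \<in> set (bvlist F)"
  unfolding bpos_def using sub_bvlist by fastforce

lemma bvlist_pos: "v \<in> set (bvlist F) \<Longrightarrow> \<exists>p. bpos F v p"
proof (induction F)
  case (Atom n ts) then show ?case by simp
next
  case (Imp A B)
  then show ?case
    by (metis Un_iff bpos_Imp_Cons bvlist.simps(2) set_append)
next
  case (All x A)
  then show ?case
    by (metis bpos_All_Cons bpos_All_Nil bvlist.simps(3) set_ConsD)
qed

lemma bpos_unique: "distinct (bvlist F) \<Longrightarrow> bpos F v p \<Longrightarrow> bpos F v p' \<Longrightarrow> p = p'"
proof (induction F arbitrary: p p')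
  case (Atom n ts) then show ?case by simp
next
  case (Imp A B)
  show ?case
  proof (cases p)
    case Nil with Imp show ?thesis by simp
  next
    case (Cons i q)
    show ?thesis
    proof (cases p')
      case Nil with Imp show ?thesis by simp
    next
      case (Cons j q')
      with Imp \<open>p = i # q\<close> show ?thesis
        by simp (metis bpos_in disjoint_iff)
    qed
  qed
next
  case (All x A)
  show ?case
  proof (cases p)
    case Nil
    with All show ?thesis
      by (cases p') (auto dest: bpos_in)
  next
    case (Cons i q)
    with All show ?thesis
      by (cases p') (auto dest: bpos_in)
  qed
qed

definition sp :: "nat list \<Rightarrow> nat list \<Rightarrow> bool" where
  "sp p q \<longleftrightarrow> (\<exists>r. r \<noteq> [] \<and> q = p @ r)"

lemma fv_sub: "sub F q = Some H \<Longrightarrow> v \<in> fv H \<Longrightarrow> v \<in> fv F \<or> (\<exists>p. bpos F v p \<and> sp p q)"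
proof (induction F q arbitrary: H rule: sub.induct)
  case (1 A) then show ?case by simp
next
  case (2 A B i p)
  show ?case
  proof (cases "i = 0")
    case True
    with 2 have "v \<in> fv A \<or> (\<exists>p'. bpos A v p' \<and> sp p' p)" by auto
    then show ?thesis
    proof
      assume "v \<in> fv A" then show ?thesis by simp
    next
      assume "\<exists>p'. bpos A v p' \<and> sp p' p"
      then obtain p' r where "bpos A v p'" "r \<noteq> []" "p = p' @ r" by (auto simp: sp_def)
      then have "bpos (Imp A B) v (0#p') \<and> sp (0#p') (i#p)" using True by (simp add: sp_def)
      then show ?thesis by blast
    qed
  next
    case False
    with 2 have i1: "i = 1" by (auto split: if_splits)
    with 2 have "v \<in> fv B \<or> (\<exists>p'. bpos B v p' \<and> sp p' p)" by auto
    then show ?thesis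
    proof
      assume "v \<in> fv B" then show ?thesis by simp
    next
      assume "\<exists>p'. bpos B v p' \<and> sp p' p"
      then obtain p' r where "bpos B v p'" "r \<noteq> []" "p = p' @ r" by (auto simp: sp_def)
      then have "bpos (Imp A B) v (1#p') \<and> sp (1#p') (i#p)" using i1 by (simp add: sp_def)
      then show ?thesis by blast
    qed
  qed
next
  case (3 x A i p)
  then have i0: "i = 0" by (auto split: if_splits)
  with 3 have "v \<in> fv A \<or> (\<exists>p'. bpos A v p' \<and> sp p' p)" by auto
  then show ?case
  proof
    assume "v \<in> fv A"
    then show ?thesis
    proof (cases "v = x")
      case True
      then have "bpos (All x A) v [] \<and> sp [] (i#p)" by (simp add: sp_def)
      then show ?thesis by blast
    qed (simp)
  next
    assume "\<exists>p'. bpos A v p' \<and> sp p' p"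
    then obtain p' r where "bpos A v p'" "r \<noteq> []" "p = p' @ r" by (auto simp: sp_def)
    then have "bpos (All x A) v (0#p') \<and> sp (0#p') (i#p)" using i0 by (simp add: sp_def)
    then show ?thesis by blast
  qed
next
  case (4 q ts i p) then show ?case by simp
qed

lemma Vb_a: "sub F p = Some G \<Longrightarrow> y \<in> set (bvlist G) \<Longrightarrow> \<exists>r. bpos F y (p @ r)"
proof -
  assume s: "sub F p = Some G" and y: "y \<in> set (bvlist G)"
  from bvlist_pos[OF y] obtain r where "bpos G y r" by blast
  then show ?thesis using s by (auto simp: bpos_def sub_append)
qed

lemma Vb_b: "bpos F z p \<Longrightarrow> bpos F y (p @ r) \<Longrightarrow> y \<in> Vb F z"
proof -
  assume a: "bpos F z p" "bpos F y (p @ r)"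
  then obtain A where A: "sub F p = Some (All z A)" by (auto simp: bpos_def)
  from a(2) obtain B where "sub F (p @ r) = Some (All y B)" by (auto simp: bpos_def)
  with A have "sub (All z A) r = Some (All y B)" by (simp add: sub_append)
  then have "y \<in> set (bvlist (All z A))" using sub_bvlist by fastforce
  with A show ?thesis by (auto simp: Vb_def bvars_def)
qed

lemma Vb_c: "y \<in> Vb F z \<Longrightarrow> \<exists>p r. bpos F z p \<and> bpos F y (p @ r)"
proof -
  assume "y \<in> Vb F z"
  then obtain p A where A: "sub F p = Some (All z A)" "y \<in> set (bvlist (All z A))"
    by (auto simp: Vb_def bvars_def)
  from Vb_a[OF A] A(1) show ?thesis by (auto simp: bpos_def)
qed



lemma occurs_add: "occurs I (add_mset J G) \<longleftrightarrow> I = J \<or> (\<exists>V D. J = Br V D \<and> occurs I D) \<or> occurs I G"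
proof
  assume "occurs I (add_mset J G)"
  then show "I = J \<or> (\<exists>V D. J = Br V D \<and> occurs I D) \<or> occurs I G"
  proof (cases rule: occurs.cases)
    case 1 then show ?thesis by (auto intro: occurs.intros)
  next
    case (2 V D)
    then show ?thesis by (metis insert_iff occurs.intros(2) set_mset_add_mset_insert)
  qed
next
  assume "I = J \<or> (\<exists>V D. J = Br V D \<and> occurs I D) \<or> occurs I G"
  then show "occurs I (add_mset J G)"
  proof (elim disjE exE conjE)
    assume "occurs I G"
    then show ?thesis
      by (induction rule: occurs.induct) (auto intro: occurs.intros)
  qed (auto intro: occurs.intros)
qed

lemma occurs_empty[simp]: "\<not> occurs I {#}"
  by (auto elim: occurs.cases)

lemma occurs_union[simp]: "occurs I (A + B) \<longleftrightarrow> occurs I A \<or> occurs I B"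
  by (induction A) (auto simp: occurs_add)

lemma occurs_trans: "occurs (Br V D) G \<Longrightarrow> occurs I D \<Longrightarrow> occurs I G"
  by (induction "Br V D" G rule: occurs.induct) (auto intro: occurs.intros)


fun head :: "item \<Rightarrow> fm + var set" where
  "head (Fm A) = Inl A" | "head (Br V G) = Inr V"

lemma clean_heads: "clean G G' \<Longrightarrow> occurs I G' \<Longrightarrow> \<exists>J. occurs J G \<and> head J = head I"
proof (induction arbitrary: I rule: clean.induct)
  case (extrude I0 V \<Gamma> \<Delta>)
  have sub: "occurs K (add_mset I0 \<Gamma>) \<Longrightarrow> occurs K (add_mset (Br V (add_mset I0 \<Gamma>)) \<Delta>)" for K
    by (simp add: occurs_add)
  from extrude.prems have "occurs I (add_mset I0 \<Gamma>) \<or> I = Br V \<Gamma> \<or> occurs I \<Delta>"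
    by (auto simp: occurs_add)
  then show ?case
  proof (elim disjE)
    assume "occurs I (add_mset I0 \<Gamma>)" then show ?thesis using sub by blast
  next
    assume "I = Br V \<Gamma>"
    then have "occurs (Br V (add_mset I0 \<Gamma>)) (add_mset (Br V (add_mset I0 \<Gamma>)) \<Delta>) \<and> head (Br V (add_mset I0 \<Gamma>)) = head I"
      by (simp add: occurs_add)
    then show ?thesis by blast
  next
    assume "occurs I \<Delta>"
    then have "occurs I (add_mset (Br V (add_mset I0 \<Gamma>)) \<Delta>)" by (simp add: occurs_add)
    then show ?thesis by blast
  qed
next
  case (empty V \<Delta>)
  then have "occurs I (add_mset (Br V {#}) \<Delta>)" by (simp add: occurs_add)
  then show ?case by blast
next
  case (contract I0 \<Delta>)
  then have "occurs I (add_mset I0 (add_mset I0 \<Delta>))" by (simp add: occurs_add)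
  then show ?case by blast
next
  case (inside \<Gamma> \<Gamma>' V \<Delta>)
  from inside.prems have "I = Br V \<Gamma>' \<or> occurs I \<Gamma>' \<or> occurs I \<Delta>"
    by (simp add: occurs_add)
  then show ?case
  proof (elim disjE)
    assume "I = Br V \<Gamma>'"
    then have "occurs (Br V \<Gamma>) (add_mset (Br V \<Gamma>) \<Delta>) \<and> head (Br V \<Gamma>) = head I"
      by (simp add: occurs_add)
    then show ?thesis by blast
  next
    assume "occurs I \<Gamma>'"
    from inside.IH[OF this] obtain J where "occurs J \<Gamma>" "head J = head I" by blast
    then have "occurs J (add_mset (Br V \<Gamma>) \<Delta>) \<and> head J = head I" by (simp add: occurs_add)
    then show ?thesis by blast
  next
    assume "occurs I \<Delta>"
    then have "occurs I (add_mset (Br V \<Gamma>) \<Delta>)" by (simp add: occurs_add)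
    then show ?thesis by blast
  qed
qed

lemma clean_heads_rt: "clean\<^sup>*\<^sup>* G G' \<Longrightarrow> occurs I G' \<Longrightarrow> \<exists>J. occurs J G \<and> head J = head I"
proof (induction arbitrary: I rule: rtranclp_induct)
  case base then show ?case by blast
next
  case (step y z)
  then show ?case using clean_heads by metis
qed

definition subfm :: "fm \<Rightarrow> fm \<Rightarrow> bool" where
  "subfm E A \<longleftrightarrow> (\<exists>p. sub E p = Some A)"

fun good_head :: "fm \<Rightarrow> fm + var set \<Rightarrow> bool" where
  "good_head E (Inl A) = subfm E A"
| "good_head E (Inr V) = (\<exists>z \<in> bvars E. V = Vb E z)"

definition good_ctx :: "fm \<Rightarrow> ctx \<Rightarrow> bool" where
  "good_ctx E G \<longleftrightarrow> (\<forall>I. occurs I G \<longrightarrow> good_head E (head I))"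

definition good_seq :: "fm \<Rightarrow> ctx \<times> fm \<Rightarrow> bool" where
  "good_seq E s \<longleftrightarrow> subfm E (snd s) \<and> good_ctx E (fst s)"

lemma good_nf: "is_nf_strategy nf \<Longrightarrow> good_ctx E G \<Longrightarrow> good_ctx E (nf G)"
  unfolding is_nf_strategy_def good_ctx_def by (metis clean_heads_rt)



lemma subfm_Imp: "subfm E (Imp A B) \<Longrightarrow> subfm E A \<and> subfm E B"
proof -
  assume "subfm E (Imp A B)"
  then obtain p where p: "sub E p = Some (Imp A B)" by (auto simp: subfm_def)
  have "sub E (p @ [0]) = Some A" "sub E (p @ [1]) = Some B" using p by (simp_all add: sub_append)
  then show ?thesis unfolding subfm_def by blast
qed

lemma subfm_All: "subfm E (All x A) \<Longrightarrow> subfm E A"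
proof -
  assume "subfm E (All x A)"
  then obtain p where p: "sub E p = Some (All x A)" by (auto simp: subfm_def)
  have "sub E (p @ [0]) = Some A" using p by (simp_all add: sub_append)
  then show ?thesis unfolding subfm_def by blast
qed

lemma subfm_imps: "subfm E (imps As P) \<Longrightarrow> A \<in> set As \<Longrightarrow> subfm E A"
proof (induction As)
  case Nil then show ?case by simp
next
  case (Cons a As)
  have "subfm E (Imp a (imps As P))" using Cons.prems by (simp add: imps_def)
  then have "subfm E a" "subfm E (imps As P)" using subfm_Imp by blast+
  then show ?case using Cons by auto
qed

lemma Vb_eq: "distinct (bvlist E) \<Longrightarrow> sub E p = Some (All x A) \<Longrightarrow> bvars (All x A) = Vb E x \<and> x \<in> bvars E"
proof -
  assume d: "distinct (bvlist E)" and s: "sub E p = Some (All x A)"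
  have "bpos E x p" using s by (auto simp: bpos_def)
  then have xin: "x \<in> bvars E" by (simp add: bpos_in bvars_def)
  have "Vb E x = bvars (All x A)"
  proof
    show "Vb E x \<subseteq> bvars (All x A)"
    proof
      fix y assume "y \<in> Vb E x"
      then obtain p' A' where "sub E p' = Some (All x A')" "y \<in> bvars (All x A')" by (auto simp: Vb_def)
      moreover have "p' = p" using bpos_unique[OF d \<open>bpos E x p\<close>] calculation by (auto simp: bpos_def)
      ultimately show "y \<in> bvars (All x A)" using s by simp
    qed
  next
    show "bvars (All x A) \<subseteq> Vb E x" using s by (auto simp: Vb_def)
  qed
  with xin show ?thesis by simp
qed


lemma plug_occ: "occurs I X \<Longrightarrow> occurs I (plug L X)"
proof (induction L)
  case Nil then show ?case by simp
next
  case (Cons a L)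
  then show ?case by (cases a) (auto simp: occurs_add)
qed

lemma outer_occ: "occurs I (outer L acc) \<Longrightarrow> occurs I acc \<or> (\<exists>J. occurs J (plug L X) \<and> head J = head I)"
proof (induction L arbitrary: acc)
  case Nil then show ?case by simp
next
  case (Cons a L)
  obtain G V where a: "a = (G, V)" by (cases a)
  from Cons.prems a have "occurs I (outer L {# Br V (acc + G) #})" by simp
  from Cons.IH[OF this] show ?case
  proof
    assume "occurs I {# Br V (acc + G) #}"
    then have "I = Br V (acc + G) \<or> occurs I acc \<or> occurs I G" by (simp add: occurs_add)
    then show ?thesis
    proof (elim disjE)
      assume "I = Br V (acc + G)"
      then have "occurs (Br V (plug L X)) (plug (a # L) X) \<and> head (Br V (plug L X)) = head I"
        using a by (simp add: occurs_add)
      then show ?thesis by blast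
    next
      assume "occurs I G"
      then have "occurs I (plug (a # L) X)" using a by (simp add: occurs_add)
      then show ?thesis by blast
    qed simp
  next
    assume "\<exists>J. occurs J (plug L X) \<and> head J = head I"
    then obtain J where "occurs J (plug L X)" "head J = head I" by blast
    moreover have "occurs J (plug (a # L) X)" using calculation a by (simp add: occurs_add)
    ultimately show ?thesis by blast
  qed
qed


lemma rule_good:
  assumes d: "distinct (bvlist E)" and nf: "is_nf_strategy nf"
    and r: "rule_inst nf G C prems" and g: "good_seq E (G, C)" and s: "s \<in> set prems"
  shows "good_seq E s"
  using r unfolding rule_inst_def
proof (elim disjE exE conjE)
  fix A B assume C: "C = Imp A B" and p: "prems = [(nf (add_mset (Fm A) G), B)]"
  from g C have "subfm E A" "subfm E B" by (auto simp: good_seq_def dest: subfm_Imp)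
  moreover have "good_ctx E (add_mset (Fm A) G)"
    using g calculation by (auto simp: good_seq_def good_ctx_def occurs_add)
  ultimately show ?thesis using s p good_nf[OF nf] by (auto simp: good_seq_def)
next
  fix x A assume C: "C = All x A" and p: "prems = [(nf {# Br (bvars (All x A)) G #}, A)]"
  from g C have sA: "subfm E A" by (auto simp: good_seq_def dest: subfm_All)
  from g C obtain q where "sub E q = Some (All x A)" by (auto simp: good_seq_def subfm_def)
  from Vb_eq[OF d this] have "good_head E (Inr (bvars (All x A)))" by auto
  then have "good_ctx E {# Br (bvars (All x A)) G #}"
    using g by (auto simp: good_seq_def good_ctx_def occurs_add)
  then show ?thesis using s p sA good_nf[OF nf] by (auto simp: good_seq_def)
next
  fix L Gi As p ts
  assume C: "C = Atom p ts" and G: "G = plug L (Gi + {# Fm (imps As (Atom p ts)) #})"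
    and p: "prems = map (\<lambda>A. (nf (outer L {#} + Gi + {# Fm (imps As (Atom p ts)) #}), A)) As"
  let ?X = "Gi + {# Fm (imps As (Atom p ts)) #}"
  have gG: "good_ctx E G" using g by (simp add: good_seq_def)
  have "occurs (Fm (imps As (Atom p ts))) G" unfolding G by (rule plug_occ) (simp add: occurs_add)
  then have si: "subfm E (imps As (Atom p ts))" using gG by (auto simp: good_ctx_def)
  have "good_ctx E (outer L {#} + ?X)"
    unfolding good_ctx_def
  proof (intro allI impI)
    fix I assume "occurs I (outer L {#} + ?X)"
    then have "occurs I (outer L {#}) \<or> occurs I ?X" by (simp only: occurs_union)
    then show "good_head E (head I)"
    proof
      assume "occurs I (outer L {#})"
      from outer_occ[OF this, of ?X] obtain J where "occurs J G" "head J = head I"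
        unfolding G by auto
      then show ?thesis using gG by (metis good_ctx_def)
    next
      assume "occurs I ?X"
      then have "occurs I G" unfolding G by (rule plug_occ)
      then show ?thesis using gG by (simp add: good_ctx_def)
    qed
  qed
  then have "good_ctx E (nf (outer L {#} + Gi + {# Fm (imps As (Atom p ts)) #}))"
    using good_nf[OF nf] by (simp add: add.assoc)
  then show ?thesis using s p si subfm_imps by (auto simp: good_seq_def)
qed

lemma deriv_good:
  assumes "derivation nf t" "is_nf_strategy nf" "distinct (bvlist E)" "good_seq E (root t)"
    "in_tree s t"
  shows "good_seq E s"
  using assms(1,4,5)
proof (induction t arbitrary: s rule: derivation.induct)
  case (1 G C ts)
  have prem: "good_seq E (root t)" if "t \<in> set ts" for t
    using rule_good[OF assms(3) assms(2) 1(2)] 1(4) that by simp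
  from 1(5) show ?case
  proof (cases rule: in_tree.cases)
    case 1 then show ?thesis using \<open>good_seq E (root (DNode G C ts))\<close> by simp
  next
    case (2 t)
    then show ?thesis using 1(3) prem by blast
  qed
qed



lemma clean_add: "clean A B \<Longrightarrow> clean (A + C) (B + C)"
proof (induction rule: clean.induct)
  case (extrude I V \<Gamma> \<Delta>)
  then show ?case using clean.extrude[of I V \<Gamma> "\<Delta> + C"] by simp
next
  case (empty V \<Delta>)
  then show ?case using clean.empty[of V "\<Delta> + C"] by simp
next
  case (contract I \<Delta>)
  then show ?case using clean.contract[of I "\<Delta> + C"] by simp
next
  case (inside \<Gamma> \<Gamma>' V \<Delta>)
  then show ?case using clean.inside[of \<Gamma> \<Gamma>' V "\<Delta> + C"] by simp
qed

lemma normal_child: "normal_item (Br V D) \<Longrightarrow> J \<in># D \<Longrightarrow> normal_item J"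
proof -
  assume n: "normal_item (Br V D)" and J: "J \<in># D"
  show "normal_item J"
    unfolding normal_item_def normal_ctx_def
  proof
    assume "\<exists>D'. clean {#J#} D'"
    then obtain D' where c: "clean {#J#} D'" by blast
    obtain D0 where D: "D = add_mset J D0" using J by (metis mset_add)
    have "clean ({#J#} + D0) (D' + D0)" by (rule clean_add[OF c])
    then have "clean D (D' + D0)" using D by simp
    then have "clean (add_mset (Br V D) {#}) (add_mset (Br V (D' + D0)) {#})" by (rule clean.inside)
    then show False using n unfolding normal_item_def normal_ctx_def by auto
  qed
qed

lemma normal_ext: "normal_item (Br V D) \<Longrightarrow> J \<in># D \<Longrightarrow> FV J \<inter> V \<noteq> {}"
proof
  assume n: "normal_item (Br V D)" and J: "J \<in># D" and e: "FV J \<inter> V = {}"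
  obtain D0 where D: "D = add_mset J D0" using J by (metis mset_add)
  have "clean (add_mset (Br V (add_mset J D0)) {#}) (add_mset J (add_mset (Br V D0) {#}))"
    by (rule clean.extrude[OF e])
  then show False using n D unfolding normal_item_def normal_ctx_def by auto
qed

lemma good_child: "good_ctx E {#Br V D#} \<Longrightarrow> J \<in># D \<Longrightarrow> good_ctx E {#J#}"
proof -
  assume g: "good_ctx E {#Br V D#}" and J: "J \<in># D"
  have "occurs K D" if "occurs K {#J#}" for K
  proof -
    from that have "K = J \<or> (\<exists>V' D'. J = Br V' D' \<and> occurs K D')" by (simp add: occurs_add)
    then show ?thesis using J by (auto intro: occurs.intros)
  qed
  then show ?thesis using g unfolding good_ctx_def by (auto simp: occurs_add)
qed

definition Sb :: "fm \<Rightarrow> nat list \<Rightarrow> var set" where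
  "Sb E q = {v. \<exists>p. bpos E v p \<and> sp p q}"

lemma FV_Fm[simp]: "FV (Fm A) = fv A"
  by (auto simp: FV_def elim: vfree.cases intro: vfree.intros)

lemma FV_Br: "v \<in> FV (Br V D) \<Longrightarrow> \<exists>J. J \<in># D \<and> v \<in> FV J \<and> v \<notin> V"
  by (auto simp: FV_def elim: vfree.cases)

lemma main:
  assumes E: "fv E = {}" "distinct (bvlist E)"
  shows "normal_item I \<Longrightarrow> good_ctx E {#I#} \<Longrightarrow>
     (\<exists>q. FV I \<subseteq> Sb E q) \<and> (\<forall>V D z. I = Br V D \<longrightarrow> V = Vb E z \<longrightarrow> z \<in> bvars E \<longrightarrow> (\<exists>p. bpos E z p \<and> FV I \<subseteq> Sb E p))"
proof (induction I)
  case (Fm A)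
  then have "subfm E A" by (auto simp: good_ctx_def occurs_add)
  then obtain q where q: "sub E q = Some A" by (auto simp: subfm_def)
  have "FV (Fm A) \<subseteq> Sb E q"
    using fv_sub[OF q] E(1) by (auto simp: Sb_def)
  then show ?case by blast
next
  case (Br V D)
  have key: "\<exists>p. bpos E z p \<and> FV (Br V D) \<subseteq> Sb E p" if z: "V = Vb E z" "z \<in> bvars E" for z
  proof -
    obtain p where p: "bpos E z p" using bvlist_pos z(2) by (auto simp: bvars_def)
    have "FV (Br V D) \<subseteq> Sb E p"
    proof
      fix v assume "v \<in> FV (Br V D)"
      then obtain J where J: "J \<in># D" "v \<in> FV J" "v \<notin> V" using FV_Br by blast
      have nJ: "normal_item J" using normal_child Br.prems(1) J(1) by blast
      have gJ: "good_ctx E {#J#}" using good_child Br.prems(2) J(1) by blast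
      from Br.IH[OF _ nJ gJ] J(1) obtain qJ where qJ: "FV J \<subseteq> Sb E qJ" by auto
      from normal_ext[OF Br.prems(1) J(1)] obtain w where w: "w \<in> FV J" "w \<in> V" by blast
      from w(1) qJ obtain pw rw where pw: "bpos E w pw" "qJ = pw @ rw"
        by (auto simp: Sb_def sp_def)
      from J(2) qJ obtain pv rv where pv: "bpos E v pv" "qJ = pv @ rv"
        by (auto simp: Sb_def sp_def)
      from w(2) z(1) Vb_c obtain p0 r0 where p0: "bpos E z p0" "bpos E w (p0 @ r0)" by blast
      have "p0 = p" using bpos_unique[OF E(2) p0(1) p] .
      moreover have "p0 @ r0 = pw" using bpos_unique[OF E(2) p0(2) pw(1)] .
      ultimately have pw': "pw = p @ r0" by simp
      have nv: "\<not> (\<exists>r. pv = p @ r)"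
      proof
        assume "\<exists>r. pv = p @ r"
        then obtain r where "pv = p @ r" by blast
        then have "v \<in> Vb E z" using Vb_b[OF p] pv(1) by simp
        then show False using J(3) z(1) by simp
      qed
      have "pv @ rv = p @ (r0 @ rw)" using pv(2) pw(2) pw' by simp
      then obtain us where "pv = p @ us \<and> us @ rv = r0 @ rw \<or> pv @ us = p \<and> rv = us @ r0 @ rw"
        by (auto simp: append_eq_append_conv2)
      then have "pv @ us = p" using nv by blast
      moreover have "us \<noteq> []" using nv calculation by auto
      ultimately have "sp pv p" by (auto simp: sp_def)
      then show "v \<in> Sb E p" using pv(1) by (auto simp: Sb_def)
    qed
    then show ?thesis using p by blast
  qed
  from Br.prems(2) obtain z where "z \<in> bvars E" "V = Vb E z"
    by (auto simp: good_ctx_def occurs_add)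
  with key show ?case by blast
qed

theorem proposition12:
  fixes E :: fm and x :: var and nf :: "ctx \<Rightarrow> ctx" and T :: dtree and \<Gamma> :: ctx
  assumes "fv E = {}"
    and "distinct (bvlist E)"
    and "x \<in> bvars E"
    and "is_nf_strategy nf"
    and "derivation nf T"
    and "root T = ({#}, E)"
    and "item_in_tree (Br (Vb E x) \<Gamma>) T"
    and "normal_item (Br (Vb E x) \<Gamma>)"
  shows "\<forall>x' \<Gamma>'. x' \<in> bvars E \<and> Br (Vb E x') \<Gamma>' \<in># \<Gamma> \<longrightarrow> in_scope E x' x"
proof (intro allI impI, elim conjE)
  fix x' \<Gamma>' assume x': "x' \<in> bvars E" and J: "Br (Vb E x') \<Gamma>' \<in># \<Gamma>"
  from assms(7) obtain G C where GC: "in_tree (G, C) T" "occurs (Br (Vb E x) \<Gamma>) G"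
    by (auto simp: item_in_tree_def)
  have r: "good_seq E (root T)" using assms(6)
    by (auto simp: good_seq_def good_ctx_def subfm_def intro: exI[of _ "[]"])
  have "good_seq E (G, C)" by (rule deriv_good[OF assms(5) assms(4) assms(2) r GC(1)])
  then have gG: "good_ctx E G" by (simp add: good_seq_def)
  have g: "good_ctx E {#Br (Vb E x) \<Gamma>#}"
    unfolding good_ctx_def
  proof (intro allI impI)
    fix K assume "occurs K {#Br (Vb E x) \<Gamma>#}"
    then have "K = Br (Vb E x) \<Gamma> \<or> occurs K \<Gamma>" by (simp add: occurs_add)
    then have "occurs K G" using GC(2) occurs_trans by blast
    then show "good_head E (head K)" using gG by (simp add: good_ctx_def)
  qed
  let ?J = "Br (Vb E x') \<Gamma>'"
  have nJ: "normal_item ?J" using normal_child[OF assms(8) J] .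
  have gJ: "good_ctx E {#?J#}" using good_child[OF g J] .
  from main[OF assms(1,2) nJ gJ] x' obtain p' where p': "bpos E x' p'" "FV ?J \<subseteq> Sb E p'"
    by blast
  from normal_ext[OF assms(8) J] obtain w where w: "w \<in> FV ?J" "w \<in> Vb E x" by blast
  from w(1) p'(2) obtain pw r2 where pw: "bpos E w pw" "r2 \<noteq> []" "p' = pw @ r2"
    by (auto simp: Sb_def sp_def)
  from w(2) Vb_c obtain px r where px: "bpos E x px" "bpos E w (px @ r)" by blast
  have "px @ r = pw" using bpos_unique[OF assms(2) px(2) pw(1)] .
  then have "p' = px @ (r @ r2)" using pw(3) by simp
  then show "in_scope E x' x" unfolding in_scope_def using px(1) p'(1) pw(2) by blast
qed

end
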